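(* Let $F:\mathbb{R}^d\times\mathbb{R}^d\to\mathbb{R}$ be twice continuously differentiable and suppose there are constants $L\le M<0$ and $0\le M'<-M$ such that for all $u,u'\in\mathbb{R}^d$: (i) every eigenvalue of the symmetric matrix $\nabla_1^2F(u,u')$ lies in $[L,M]$; (ii) every singular value of $\nabla_2\nabla_1F(u,u')$ is at most $M'$. Assume there exists $u^*\in\mathbb{R}^d$ with $u^*=\arg\max_{u\in\mathbb{R}^d}F(u,u^* )$. Let $0<\eta<-\tfrac{1}{2L}$. Then: (a) for every initial $u_0\in\mathbb{R}^d$, the sequence $u_{k+1}=\mathrm{PD}_F(u_k;u_k,\eta)$ converges to $u^*$; (b) for every integer $N_t\ge 1$ and every initial $u_0\in\mathbb{R}^d$, the sequence $u_{k+1}=U_{N_t}(u_k)$ converges to $u^*$, where $U_{N_t}(u)$ denotes the point $v_{N_t}$ obtained from $v_0=u$, $v_{j+1}=\mathrm{PD}_F(v_j;u,\eta)$ for $j=0,\dots,N_t-1$ (the behavior argument is held fixed at $u$).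
   Context: For $F:\mathbb{R}^d\times\mathbb{R}^d\to\mathbb{R}$, $\nabla_1F(u,u')=\frac{\partial}{\partial u}F(u,u')$ is the gradient in the first argument, $\nabla_1^2F(u,u')=\frac{\partial^2}{\partial u^2}F(u,u')$ the Hessian in the first argument, and $\nabla_2\nabla_1F(u,u')=\frac{\partial^2}{\partial u'\partial u}F(u,u')$ the $d\times d$ matrix of mixed second derivatives. The partial derivative step is $\mathrm{PD}_F(u;u',\eta):=u+\eta\,\nabla_1F(u,u')$ for $u,u'\in\mathbb{R}^d$, $\eta>0$. *)

theory Defs
  imports "HOL-Analysis.Analysis"
begin

definition mat_eigenvalue :: "real^'n^'n \<Rightarrow> real \<Rightarrow> bool" where
  "mat_eigenvalue A lam \<longleftrightarrow> (\<exists>v. v \<noteq> 0 \<and> A *v v = lam *\<^sub>R v)"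

definition mat_singular_value :: "real^'n^'n \<Rightarrow> real \<Rightarrow> bool" where
  "mat_singular_value A s \<longleftrightarrow> s \<ge> 0 \<and> mat_eigenvalue (transpose A ** A) (s\<^sup>2)"

text \<open>Partial derivative step; G is the gradient of F in its first argument.\<close>
definition PD :: "('v \<Rightarrow> 'v \<Rightarrow> 'v::real_vector) \<Rightarrow> 'v \<Rightarrow> 'v \<Rightarrow> real \<Rightarrow> 'v" where
  "PD G u u' eta = u + eta *\<^sub>R G u u'"

definition U_iter :: "('v \<Rightarrow> 'v \<Rightarrow> 'v::real_vector) \<Rightarrow> real \<Rightarrow> nat \<Rightarrow> 'v \<Rightarrow> 'v" where
  "U_iter G eta N u = ((\<lambda>v. PD G v u eta) ^^ N) u"

end

theory Submission
  imports Defs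
begin


lemma quad_disc:
  fixes a b c :: real
  assumes h: "\<And>t. 0 \<le> a + 2*b*t + c*t\<^sup>2" and c: "0 \<le> c"
  shows "b\<^sup>2 \<le> a*c"
proof (cases "c = 0")
  case True
  show ?thesis
  proof (cases "b = 0")
    case False
    have "0 \<le> a + 2*b*(-(a+1)/(2*b)) + c*(-(a+1)/(2*b))\<^sup>2" by (rule h)
    with True False show ?thesis by (simp add: field_simps)
  qed (use True h[of 0] in simp)
next
  case False
  with c have cp: "c > 0" by simp
  have "0 \<le> a + 2*b*(-b/c) + c*(-b/c)\<^sup>2" by (rule h)
  hence "0 \<le> (a + 2*b*(-b/c) + c*(-b/c)\<^sup>2) * c" using cp by simp
  also have "\<dots> = a*c - b\<^sup>2" using cp by (simp add: field_simps power2_eq_square)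
  finally show ?thesis by simp
qed

lemma psd_cs:
  fixes P :: "real^'n^'n" and x y :: "real^'n"
  assumes sym: "\<And>x y. x \<bullet> (P *v y) = y \<bullet> (P *v x)"
    and psd: "\<And>z. 0 \<le> z \<bullet> (P *v z)"
  shows "(x \<bullet> (P *v y))\<^sup>2 \<le> (x \<bullet> (P *v x)) * (y \<bullet> (P *v y))"
proof (rule quad_disc)
  fix t :: real
  have "(x + t *\<^sub>R y) \<bullet> (P *v (x + t *\<^sub>R y)) = x \<bullet> (P *v x) + t * (x \<bullet> (P *v y)) + t * (y \<bullet> (P *v x)) + t\<^sup>2 * (y \<bullet> (P *v y))"
    by (simp add: matrix_vector_right_distrib matrix_vector_mult_scaleR inner_add_left inner_add_right power2_eq_square algebra_simps)
  also have "\<dots> = x \<bullet> (P *v x) + 2 * (x \<bullet> (P *v y)) * t + (y \<bullet> (P *v y)) * t\<^sup>2"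
    using sym[of y x] by (simp add: algebra_simps)
  finally show "0 \<le> x \<bullet> (P *v x) + 2 * (x \<bullet> (P *v y)) * t + (y \<bullet> (P *v y)) * t\<^sup>2"
    using psd[of "x + t *\<^sub>R y"] by simp
qed (rule psd)

lemma rayleigh_max:
  fixes S :: "real^'n^'n"
  assumes sym: "\<And>x y. x \<bullet> (S *v y) = y \<bullet> (S *v x)"
  shows "\<exists>lam. mat_eigenvalue S lam \<and> (\<forall>x. x \<bullet> (S *v x) \<le> lam * (norm x)\<^sup>2)"
proof -
  let ?f = "\<lambda>x::real^'n. x \<bullet> (S *v x)"
  have cont: "continuous_on (sphere 0 1) ?f"
    by (intro continuous_on_inner continuous_on_id linear_continuous_on matrix_vector_mul_bounded_linear)
  have ne: "sphere (0::real^'n) 1 \<noteq> {}"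
    using vector_choose_size[of 1] by auto
  obtain x0 where x0: "x0 \<in> sphere 0 1" and mx: "\<And>y. y \<in> sphere 0 1 \<Longrightarrow> ?f y \<le> ?f x0"
    using continuous_attains_sup[OF compact_sphere ne cont] by blast
  define lam where "lam = ?f x0"
  have bound: "?f y \<le> lam * (norm y)\<^sup>2" for y
  proof (cases "y = 0")
    case False
    hence np: "norm y > 0" by simp
    have "(y /\<^sub>R norm y) \<in> sphere 0 1" using np by simp
    hence "?f (y /\<^sub>R norm y) \<le> lam" using mx lam_def by blast
    moreover have "?f (y /\<^sub>R norm y) = ?f y / (norm y)\<^sup>2"
      by (simp add: matrix_vector_mult_scaleR power2_eq_square field_simps)
    ultimately show ?thesis using np by (simp add: field_simps)
  qed simp
  define P where "P = lam *\<^sub>R mat 1 - S"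
  have Pv: "P *v z = lam *\<^sub>R z - S *v z" for z
    by (simp add: P_def matrix_vector_mult_diff_rdistrib scaleR_matrix_vector_assoc[symmetric])
  have Psym: "x \<bullet> (P *v y) = y \<bullet> (P *v x)" for x y
    using sym[of x y] by (simp add: Pv inner_diff_right inner_commute)
  have Ppsd: "0 \<le> z \<bullet> (P *v z)" for z
    using bound[of z] by (simp add: Pv inner_diff_right power2_norm_eq_inner)
  have nx0: "norm x0 = 1" using x0 by simp
  have P0: "x0 \<bullet> (P *v x0) = 0"
    using nx0 by (simp add: Pv inner_diff_right lam_def power2_norm_eq_inner[symmetric])
  have "(x0 \<bullet> (P *v (P *v x0)))\<^sup>2 \<le> 0"
    using psd_cs[OF Psym Ppsd, of x0 "P *v x0"] P0 by simp
  hence "(P *v x0) \<bullet> (P *v x0) = 0"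
    using Psym[of x0 "P *v x0"] by simp
  hence "P *v x0 = 0" by simp
  hence "S *v x0 = lam *\<^sub>R x0" by (simp add: Pv)
  moreover have "x0 \<noteq> 0" using nx0 by auto
  ultimately have "mat_eigenvalue S lam" unfolding mat_eigenvalue_def by blast
  with bound show ?thesis by blast
qed

lemma neg_mat_vec: "(- S) *v x = - (S *v (x::real^'n))" for S :: "real^'n^'n"
  by (simp add: matrix_vector_mult_def sum_negf vec_eq_iff)

lemma rayleigh_min:
  fixes S :: "real^'n^'n"
  assumes sym: "\<And>x y. x \<bullet> (S *v y) = y \<bullet> (S *v x)"
  shows "\<exists>lam. mat_eigenvalue S lam \<and> (\<forall>x. lam * (norm x)\<^sup>2 \<le> x \<bullet> (S *v x))"
proof -
  have "\<And>x y. x \<bullet> ((- S) *v y) = y \<bullet> ((- S) *v x)" using sym by (simp add: neg_mat_vec)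
  from rayleigh_max[OF this] obtain mu where mu: "mat_eigenvalue (- S) mu"
    and b: "\<And>x. x \<bullet> ((- S) *v x) \<le> mu * (norm x)\<^sup>2" by blast
  have "mat_eigenvalue S (- mu)" using mu unfolding mat_eigenvalue_def
    by (auto simp: neg_mat_vec) (metis minus_equation_iff scaleR_minus_left)
  moreover have "(- mu) * (norm x)\<^sup>2 \<le> x \<bullet> (S *v x)" for x using b[of x] by (simp add: neg_mat_vec)
  ultimately show ?thesis by blast
qed

lemma sing_bound:
  fixes A :: "real^'n^'n"
  assumes sing: "\<And>s. mat_singular_value A s \<Longrightarrow> s \<le> M'" and M': "0 \<le> M'"
  shows "norm (A *v x) \<le> M' * norm x"
proof -
  define S where "S = transpose A ** A"
  have Sv: "y \<bullet> (S *v z) = (A *v y) \<bullet> (A *v z)" for y z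
    by (simp add: S_def matrix_vector_mul_assoc[symmetric] inner_commute[of y] dot_lmul_matrix) (rule inner_commute)
  have sym: "y \<bullet> (S *v z) = z \<bullet> (S *v y)" for y z by (metis Sv inner_commute)
  obtain lam where ev: "mat_eigenvalue S lam" and b: "\<And>y. y \<bullet> (S *v y) \<le> lam * (norm y)\<^sup>2"
    using rayleigh_max[OF sym] by blast
  from ev obtain v where v: "v \<noteq> 0" "S *v v = lam *\<^sub>R v" unfolding mat_eigenvalue_def by blast
  have "lam * (v \<bullet> v) = v \<bullet> (S *v v)" using v by simp
  also have "\<dots> \<ge> 0" by (simp add: Sv)
  finally have h0: "0 \<le> lam * (v \<bullet> v)" .
  have vv: "v \<bullet> v > 0" using v(1) by simp
  have lam0: "lam \<ge> 0" using h0 vv by (simp add: zero_le_mult_iff)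
  have "mat_singular_value A (sqrt lam)" unfolding mat_singular_value_def using ev lam0 S_def by simp
  hence "sqrt lam \<le> M'" by (rule sing)
  hence "lam \<le> M'\<^sup>2" using lam0 by (metis real_sqrt_le_iff real_sqrt_unique M')
  have "(norm (A *v x))\<^sup>2 = x \<bullet> (S *v x)" by (simp add: Sv power2_norm_eq_inner)
  also have "\<dots> \<le> lam * (norm x)\<^sup>2" by (rule b)
  also have "\<dots> \<le> M'\<^sup>2 * (norm x)\<^sup>2" using \<open>lam \<le> M'\<^sup>2\<close> by (simp add: mult_right_mono)
  also have "\<dots> = (M' * norm x)\<^sup>2" by (simp add: power_mult_distrib)
  finally show ?thesis by (rule power2_le_imp_le) (simp add: M')
qed

lemma contr_bound:
  fixes H :: "real^'n^'n"
  assumes sym: "\<And>x y. x \<bullet> (H *v y) = y \<bullet> (H *v x)"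
    and eig: "\<And>lam. mat_eigenvalue H lam \<Longrightarrow> L \<le> lam \<and> lam \<le> M"
    and e: "0 \<le> eta" "0 \<le> 1 + eta * L"
  shows "norm (x + eta *\<^sub>R (H *v x)) \<le> (1 + eta * M) * norm x"
proof -
  define c where "c = 1 + eta * M"
  define P where "P = mat 1 + eta *\<^sub>R H"
  have Pv: "P *v z = z + eta *\<^sub>R (H *v z)" for z
    by (simp add: P_def matrix_vector_mult_add_rdistrib scaleR_matrix_vector_assoc[symmetric])
  have Psym: "y \<bullet> (P *v z) = z \<bullet> (P *v y)" for y z
    using sym[of y z] by (simp add: Pv inner_add_right inner_commute)
  obtain l1 where l1: "mat_eigenvalue H l1" "\<And>z. z \<bullet> (H *v z) \<le> l1 * (norm z)\<^sup>2"
    using rayleigh_max[OF sym] by blast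
  obtain l2 where l2: "mat_eigenvalue H l2" "\<And>z. l2 * (norm z)\<^sup>2 \<le> z \<bullet> (H *v z)"
    using rayleigh_min[OF sym] by blast
  have up: "z \<bullet> (P *v z) \<le> c * (norm z)\<^sup>2" for z
  proof -
    have "z \<bullet> (H *v z) \<le> M * (norm z)\<^sup>2"
      using l1(2)[of z] eig[OF l1(1)] by (meson mult_right_mono order_trans zero_le_power2)
    hence "eta * (z \<bullet> (H *v z)) \<le> eta * (M * (norm z)\<^sup>2)" using e by (simp add: mult_left_mono)
    thus ?thesis by (simp add: Pv c_def inner_add_right power2_norm_eq_inner algebra_simps)
  qed
  have lo: "0 \<le> z \<bullet> (P *v z)" for z
  proof -
    have "L * (norm z)\<^sup>2 \<le> z \<bullet> (H *v z)"
      using l2(2)[of z] eig[OF l2(1)] by (meson mult_right_mono order_trans zero_le_power2)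
    hence "eta * (L * (norm z)\<^sup>2) \<le> eta * (z \<bullet> (H *v z))" using e by (simp add: mult_left_mono)
    moreover have "0 \<le> (1 + eta * L) * (norm z)\<^sup>2" using e by simp
    ultimately show ?thesis by (simp add: Pv inner_add_right power2_norm_eq_inner algebra_simps)
  qed
  have "L \<le> M" using eig[OF l1(1)] by simp
  hence "eta * L \<le> eta * M" using e by (simp add: mult_left_mono)
  hence c0: "0 \<le> c" using e by (simp add: c_def)
  let ?y = "P *v x"
  have eq: "x \<bullet> (P *v ?y) = (norm ?y)\<^sup>2" using Psym[of x ?y] by (simp add: power2_norm_eq_inner)
  have "((norm ?y)\<^sup>2)\<^sup>2 \<le> (x \<bullet> (P *v x)) * (?y \<bullet> (P *v ?y))"
    using psd_cs[OF Psym lo, of x ?y] eq by simp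
  also have "\<dots> \<le> (c * (norm x)\<^sup>2) * (c * (norm ?y)\<^sup>2)"
    by (intro mult_mono up lo) (use c0 in simp)
  finally have h: "(norm ?y)\<^sup>2 * (norm ?y)\<^sup>2 \<le> ((c * norm x)\<^sup>2) * (norm ?y)\<^sup>2"
    by (simp add: power2_eq_square algebra_simps)
  have "(norm ?y)\<^sup>2 \<le> (c * norm x)\<^sup>2"
  proof (cases "norm ?y = 0")
    case False thus ?thesis using mult_right_le_imp_le[OF h] by simp
  qed simp
  hence "norm ?y \<le> c * norm x" by (rule power2_le_imp_le) (simp add: c0)
  thus ?thesis by (simp add: Pv c_def)
qed



lemma line_deriv:
  fixes f :: "'a::real_normed_vector \<Rightarrow> 'b::real_normed_vector"
  assumes "\<And>y. (f has_derivative D y) (at y)"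
  shows "((\<lambda>\<sigma>::real. f (p + \<sigma> *\<^sub>R a)) has_derivative (\<lambda>t. D (p + \<sigma> *\<^sub>R a) (t *\<^sub>R a))) (at \<sigma>)"
proof -
  have "((\<lambda>\<sigma>::real. p + \<sigma> *\<^sub>R a) has_derivative (\<lambda>t. t *\<^sub>R a)) (at \<sigma>)"
    by (auto intro!: derivative_eq_intros)
  from has_derivative_compose[OF this assms] show ?thesis .
qed

lemma schwarz_aux:
  fixes f :: "real^'n \<Rightarrow> real" and g :: "real^'n \<Rightarrow> real^'n" and H :: "real^'n \<Rightarrow> real^'n^'n"
  assumes df: "\<And>y. (f has_derivative (\<lambda>h. g y \<bullet> h)) (at y)"
    and dg: "\<And>y. (g has_derivative (\<lambda>h. H y *v h)) (at y)"
    and s: "0 < s"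
  shows "\<exists>\<xi>. norm (\<xi> - x) \<le> s * (norm a + norm b) \<and>
     f (x + s *\<^sub>R a + s *\<^sub>R b) - f (x + s *\<^sub>R a) - f (x + s *\<^sub>R b) + f x = s\<^sup>2 * ((H \<xi> *v b) \<bullet> a)"
proof -
  define psi where "psi \<sigma> = f (x + s *\<^sub>R b + \<sigma> *\<^sub>R a) - f (x + \<sigma> *\<^sub>R a)" for \<sigma>
  have dpsi: "(psi has_derivative (\<lambda>t. g (x + s *\<^sub>R b + \<sigma> *\<^sub>R a) \<bullet> (t *\<^sub>R a) - g (x + \<sigma> *\<^sub>R a) \<bullet> (t *\<^sub>R a))) (at \<sigma> within {0..s})" for \<sigma>
    unfolding psi_def
    by (rule has_derivative_at_withinI, intro has_derivative_diff line_deriv[where D="\<lambda>y h. g y \<bullet> h"] df)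
  obtain \<sigma> where \<sigma>: "\<sigma> \<in> {0<..<s}"
    and e1: "psi s - psi 0 = g (x + s *\<^sub>R b + \<sigma> *\<^sub>R a) \<bullet> ((s - 0) *\<^sub>R a) - g (x + \<sigma> *\<^sub>R a) \<bullet> ((s - 0) *\<^sub>R a)"
    using mvt_simple[OF s dpsi] by blast
  define p where "p = x + \<sigma> *\<^sub>R a"
  define chi where "chi \<tau> = g (p + \<tau> *\<^sub>R b) \<bullet> a" for \<tau>
  have dchi: "(chi has_derivative (\<lambda>t. (H (p + \<tau> *\<^sub>R b) *v (t *\<^sub>R b)) \<bullet> a)) (at \<tau> within {0..s})" for \<tau>
    unfolding chi_def
    by (rule has_derivative_at_withinI, intro has_derivative_inner_left line_deriv[where D="\<lambda>y h. H y *v h"] dg)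
  obtain \<tau> where \<tau>: "\<tau> \<in> {0<..<s}"
    and e2: "chi s - chi 0 = (H (p + \<tau> *\<^sub>R b) *v ((s - 0) *\<^sub>R b)) \<bullet> a"
    using mvt_simple[OF s dchi] by blast
  define \<xi> where "\<xi> = p + \<tau> *\<^sub>R b"
  have "norm (\<xi> - x) = norm (\<sigma> *\<^sub>R a + \<tau> *\<^sub>R b)" by (simp add: \<xi>_def p_def)
  also have "\<dots> \<le> norm (\<sigma> *\<^sub>R a) + norm (\<tau> *\<^sub>R b)" by (rule norm_triangle_ineq)
  also have "\<dots> = \<sigma> * norm a + \<tau> * norm b" using \<sigma> \<tau> by simp
  also have "\<dots> \<le> s * norm a + s * norm b" using \<sigma> \<tau> by (intro add_mono mult_right_mono) auto
  finally have n: "norm (\<xi> - x) \<le> s * (norm a + norm b)" by (simp add: algebra_simps)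
  have "f (x + s *\<^sub>R a + s *\<^sub>R b) - f (x + s *\<^sub>R a) - f (x + s *\<^sub>R b) + f x = psi s - psi 0"
    by (simp add: psi_def algebra_simps)
  also have "\<dots> = s * (chi s - chi 0)"
    using e1 by (simp add: chi_def p_def algebra_simps inner_diff_left)
  also have "\<dots> = s\<^sup>2 * ((H \<xi> *v b) \<bullet> a)"
    using e2 by (simp add: \<xi>_def matrix_vector_mult_scaleR power2_eq_square)
  finally show ?thesis using n by blast
qed

lemma bl_mv: "bounded_linear (\<lambda>A::real^'n^'m. A *v b)"
proof -
  have "linear (\<lambda>A::real^'n^'m. A *v b)"
    by (rule linearI) (simp_all add: matrix_vector_mult_add_rdistrib scaleR_matrix_vector_assoc)
  thus ?thesis by (simp only: linear_conv_bounded_linear)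
qed

lemma tri: "\<bar>p - q\<bar> < c \<Longrightarrow> \<bar>t - r\<bar> < c \<Longrightarrow> p = t \<Longrightarrow> c = \<bar>q - r\<bar> / 2 \<Longrightarrow> False"
  for p q t r c :: real by (simp add: abs_if split: if_splits)

lemma hess_sym:
  fixes f :: "real^'n \<Rightarrow> real" and g :: "real^'n \<Rightarrow> real^'n" and H :: "real^'n \<Rightarrow> real^'n^'n"
  assumes df: "\<And>y. (f has_derivative (\<lambda>h. g y \<bullet> h)) (at y)"
    and dg: "\<And>y. (g has_derivative (\<lambda>h. H y *v h)) (at y)"
    and cH: "isCont H x"
  shows "a \<bullet> (H x *v b) = b \<bullet> (H x *v a)"
proof (rule ccontr)
  define d1 where "d1 y = (H y *v b) \<bullet> a" for y
  define d2 where "d2 y = (H y *v a) \<bullet> b" for y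
  have c1: "isCont d1 x" unfolding d1_def
    by (intro continuous_intros isCont_o2[OF cH] linear_continuous_at bl_mv)
  have c2: "isCont d2 x" unfolding d2_def
    by (intro continuous_intros isCont_o2[OF cH] linear_continuous_at bl_mv)
  assume ne: "a \<bullet> (H x *v b) \<noteq> b \<bullet> (H x *v a)"
  hence ne': "d1 x \<noteq> d2 x" by (simp add: d1_def d2_def inner_commute)
  define e where "e = \<bar>d1 x - d2 x\<bar> / 2"
  have e: "e > 0" using ne' by (simp add: e_def)
  obtain \<delta>1 where \<delta>1: "\<delta>1 > 0" "\<And>y. dist y x < \<delta>1 \<Longrightarrow> dist (d1 y) (d1 x) < e"
    using c1 e unfolding continuous_at_eps_delta by blast
  obtain \<delta>2 where \<delta>2: "\<delta>2 > 0" "\<And>y. dist y x < \<delta>2 \<Longrightarrow> dist (d2 y) (d2 x) < e"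
    using c2 e unfolding continuous_at_eps_delta by blast
  define s where "s = min \<delta>1 \<delta>2 / (2 * (norm a + norm b + 1))"
  have den: "0 < 2 * (norm a + norm b + 1)"
    by (smt (verit) norm_ge_zero)
  have s: "s > 0" unfolding s_def using \<delta>1 \<delta>2 den by (intro divide_pos_pos) auto
  have sn: "s * (norm a + norm b) < min \<delta>1 \<delta>2"
  proof -
    have "s * (norm a + norm b) \<le> s * (norm a + norm b + 1)" using s by simp
    also have "\<dots> = min \<delta>1 \<delta>2 / 2" unfolding s_def
      using den by (simp add: divide_simps)
    also have "\<dots> < min \<delta>1 \<delta>2" using \<delta>1(1) \<delta>2(1) by (simp add: min_def)
    finally show ?thesis .
  qed
  obtain \<xi> where \<xi>: "norm (\<xi> - x) \<le> s * (norm a + norm b)"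
    "f (x + s *\<^sub>R a + s *\<^sub>R b) - f (x + s *\<^sub>R a) - f (x + s *\<^sub>R b) + f x = s\<^sup>2 * d1 \<xi>"
    using schwarz_aux[OF df dg s, of x a b] unfolding d1_def by blast
  obtain \<zeta> where \<zeta>: "norm (\<zeta> - x) \<le> s * (norm b + norm a)"
    "f (x + s *\<^sub>R b + s *\<^sub>R a) - f (x + s *\<^sub>R b) - f (x + s *\<^sub>R a) + f x = s\<^sup>2 * d2 \<zeta>"
    using schwarz_aux[OF df dg s, of x b a] unfolding d2_def by blast
  have "s\<^sup>2 * d1 \<xi> = s\<^sup>2 * d2 \<zeta>" using \<xi>(2) \<zeta>(2) by (simp add: algebra_simps)
  hence eq: "d1 \<xi> = d2 \<zeta>" using s by simp
  have "dist \<xi> x < \<delta>1" using \<xi>(1) sn by (simp add: dist_norm)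
  hence a1: "\<bar>d1 \<xi> - d1 x\<bar> < e" using \<delta>1(2) by (simp add: dist_real_def)
  have "dist \<zeta> x < \<delta>2" using \<zeta>(1) sn by (simp add: dist_norm add.commute)
  hence a2: "\<bar>d2 \<zeta> - d2 x\<bar> < e" using \<delta>2(2) by (simp add: dist_real_def)
  show False using tri[OF a1 a2 eq e_def] .
qed



lemma partial1:
  assumes "((\<lambda>p. Phi (fst p) (snd p)) has_derivative D) (at (u, u'))"
  shows "((\<lambda>u. Phi u u') has_derivative (\<lambda>h. D (h, 0))) (at u)"
proof -
  have "((\<lambda>u. (u, u')) has_derivative (\<lambda>h. (h, 0))) (at u)"
    by (intro has_derivative_Pair has_derivative_ident has_derivative_const)
  from has_derivative_compose[OF this assms] show ?thesis by simp
qed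

lemma conv_lemma:
  fixes T :: "'a::real_normed_vector \<Rightarrow> 'a"
  assumes T: "\<And>u. norm (T u - us) \<le> q * norm (u - us)" and q: "0 \<le> q" "q < 1"
  shows "(\<lambda>k. (T ^^ k) u0) \<longlonglongrightarrow> us"
proof -
  have b: "norm ((T ^^ k) u0 - us) \<le> q ^ k * norm (u0 - us)" for k
  proof (induction k)
    case (Suc k)
    have "norm ((T ^^ Suc k) u0 - us) \<le> q * norm ((T ^^ k) u0 - us)" using T by simp
    also have "\<dots> \<le> q * (q ^ k * norm (u0 - us))" using Suc q by (simp add: mult_left_mono)
    finally show ?case by simp
  qed simp
  have "(\<lambda>k. q ^ k * norm (u0 - us)) \<longlonglongrightarrow> 0"
    using q by (intro tendsto_mult_left_zero LIMSEQ_power_zero) auto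
  hence "(\<lambda>k. (T ^^ k) u0 - us) \<longlonglongrightarrow> 0"
    by (rule Lim_null_comparison[rotated]) (use b in auto)
  thus ?thesis by (rule LIM_zero_cancel)
qed



theorem mainTheorem1:
  fixes F :: "real^'n \<Rightarrow> real^'n \<Rightarrow> real"
    and G1 G2 :: "real^'n \<Rightarrow> real^'n \<Rightarrow> real^'n"
    and H11 H12 H21 H22 :: "real^'n \<Rightarrow> real^'n \<Rightarrow> real^'n^'n"
    and L M M' eta :: real
    and ustar :: "real^'n"
  assumes dF: "\<And>u u'. ((\<lambda>p. F (fst p) (snd p)) has_derivative
                 (\<lambda>h. G1 u u' \<bullet> fst h + G2 u u' \<bullet> snd h)) (at (u, u'))"
    and dG1: "\<And>u u'. ((\<lambda>p. G1 (fst p) (snd p)) has_derivative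
                 (\<lambda>h. H11 u u' *v fst h + H12 u u' *v snd h)) (at (u, u'))"
    and dG2: "\<And>u u'. ((\<lambda>p. G2 (fst p) (snd p)) has_derivative
                 (\<lambda>h. H21 u u' *v fst h + H22 u u' *v snd h)) (at (u, u'))"
    and cH11: "continuous_on UNIV (\<lambda>p. H11 (fst p) (snd p))"
    and cH12: "continuous_on UNIV (\<lambda>p. H12 (fst p) (snd p))"
    and cH21: "continuous_on UNIV (\<lambda>p. H21 (fst p) (snd p))"
    and cH22: "continuous_on UNIV (\<lambda>p. H22 (fst p) (snd p))"
    and LM: "L \<le> M" "M < 0"
    and M'pos: "0 \<le> M'" "M' < - M"
    and eig: "\<And>u u' lam. mat_eigenvalue (H11 u u') lam \<Longrightarrow> L \<le> lam \<and> lam \<le> M"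
    and sing: "\<And>u u' s. mat_singular_value (H12 u u') s \<Longrightarrow> s \<le> M'"
    and argmax: "\<And>u. F u ustar \<le> F ustar ustar"
    and eta: "0 < eta" "eta < - 1 / (2 * L)"
  shows "(\<forall>u0. (\<lambda>k. ((\<lambda>u. PD G1 u u eta) ^^ k) u0) \<longlonglongrightarrow> ustar)
       \<and> (\<forall>Nt::nat. Nt \<ge> 1 \<longrightarrow> (\<forall>u0. (\<lambda>k. (U_iter G1 eta Nt ^^ k) u0) \<longlonglongrightarrow> ustar))"
proof -
  have etaL: "0 < 1 + eta * L"
  proof -
    have "L < 0" using LM by simp
    hence "eta * (-2 * L) < 1" using eta by (simp add: field_simps)
    thus ?thesis by simp
  qed
  define c where "c = 1 + eta * M"
  have "eta * L \<le> eta * M" using LM eta by (simp add: mult_left_mono)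
  hence c0: "0 < c" using etaL by (simp add: c_def)
  define q where "q = c + eta * M'"
  have q0: "0 \<le> q" using c0 eta M'pos by (simp add: q_def)
  have "eta * (M + M') < 0" using eta M'pos by (simp add: mult_pos_neg)
  hence q1: "q < 1" by (simp add: q_def c_def algebra_simps)
  have dfu: "((\<lambda>u. F u u') has_derivative (\<lambda>h. G1 u u' \<bullet> h)) (at u)" for u u'
    using partial1[OF dF[of u u']] by simp
  have dgu: "((\<lambda>u. G1 u u') has_derivative (\<lambda>h. H11 u u' *v h)) (at u)" for u u'
    using partial1[OF dG1[of u u']] by simp
  have cHu: "isCont (\<lambda>u. H11 u u') u" for u u'
  proof -
    have "isCont (\<lambda>p. H11 (fst p) (snd p)) (u, u')"
      using cH11 by (simp add: continuous_on_eq_continuous_at)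
    moreover have "isCont (\<lambda>u. (u, u')) u" by (intro continuous_intros)
    ultimately show ?thesis using isCont_o2 by fastforce
  qed
  have Hsym: "a \<bullet> (H11 u u' *v b) = b \<bullet> (H11 u u' *v a)" for u u' a b
    by (rule hess_sym[OF dfu dgu cHu])
  have Hb: "norm (x + eta *\<^sub>R (H11 u u' *v x)) \<le> c * norm x" for u u' x
    unfolding c_def using eta(1) etaL
    by (intro contr_bound[where L=L] Hsym eig) auto
  have H12b: "norm (H12 u u' *v x) \<le> M' * norm x" for u u' x
    by (rule sing_bound[OF sing M'pos(1)])
  have lip: "norm (PD G1 v u eta - PD G1 v' u' eta) \<le> c * norm (v - v') + eta * M' * norm (u - u')" for v u v' u'
  proof -
    define h where "h = v - v'"
    define k where "k = u - u'"
    define r where "r t = (v' + t *\<^sub>R h, u' + t *\<^sub>R k)" for t :: real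
    define g where "g t = PD G1 (fst (r t)) (snd (r t)) eta" for t
    define D where "D t = (\<lambda>s. s *\<^sub>R h + eta *\<^sub>R (H11 (fst (r t)) (snd (r t)) *v (s *\<^sub>R h)
        + H12 (fst (r t)) (snd (r t)) *v (s *\<^sub>R k)))" for t
    have dr: "(r has_derivative (\<lambda>s. (s *\<^sub>R h, s *\<^sub>R k))) (at t)" for t
      unfolding r_def by (auto intro!: derivative_eq_intros)
    have dg: "(g has_derivative D t) (at t)" for t
    proof -
      have "((\<lambda>t. G1 (fst (r t)) (snd (r t))) has_derivative
         (\<lambda>s. H11 (fst (r t)) (snd (r t)) *v fst (s *\<^sub>R h, s *\<^sub>R k) + H12 (fst (r t)) (snd (r t)) *v snd (s *\<^sub>R h, s *\<^sub>R k))) (at t)"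
        using has_derivative_compose[OF dr[of t] dG1[of "fst (r t)" "snd (r t)", unfolded prod.collapse]] by simp
      hence "((\<lambda>t. G1 (fst (r t)) (snd (r t))) has_derivative
         (\<lambda>s. H11 (fst (r t)) (snd (r t)) *v (s *\<^sub>R h) + H12 (fst (r t)) (snd (r t)) *v (s *\<^sub>R k))) (at t)"
        by simp
      moreover have "((\<lambda>t. fst (r t)) has_derivative (\<lambda>s. s *\<^sub>R h)) (at t)"
        unfolding r_def by (auto intro!: derivative_eq_intros)
      ultimately show ?thesis unfolding g_def D_def PD_def
        by (intro has_derivative_add has_derivative_scaleR_right)
    qed
    have cg: "continuous_on {0..1} g"
      using dg by (meson has_derivative_continuous continuous_at_imp_continuous_on)
    obtain t where "norm (g 1 - g 0) \<le> norm (D t (1 - 0))"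
      using mvt_general[OF zero_less_one cg dg] by blast
    also have "D t (1 - 0) = (h + eta *\<^sub>R (H11 (fst (r t)) (snd (r t)) *v h)) + eta *\<^sub>R (H12 (fst (r t)) (snd (r t)) *v k)"
      by (simp add: D_def scaleR_add_right)
    also have "norm \<dots> \<le> norm (h + eta *\<^sub>R (H11 (fst (r t)) (snd (r t)) *v h)) + norm (eta *\<^sub>R (H12 (fst (r t)) (snd (r t)) *v k))"
      by (rule norm_triangle_ineq)
    also have "\<dots> \<le> c * norm h + eta * (M' * norm k)"
      using Hb H12b eta(1) by (intro add_mono) (auto intro: mult_left_mono)
    finally show ?thesis
      by (simp add: g_def r_def h_def k_def)
  qed
  have G0: "G1 ustar ustar = 0"
  proof -
    have "(\<lambda>h. G1 ustar ustar \<bullet> h) = (\<lambda>v. 0)"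
      by (rule differential_zero_maxmin[OF _ open_UNIV dfu]) (use argmax in auto)
    hence "G1 ustar ustar \<bullet> G1 ustar ustar = 0" by metis
    thus ?thesis by simp
  qed
  have fix0: "PD G1 ustar ustar eta = ustar" by (simp add: PD_def G0)
  have partA: "(\<lambda>k. ((\<lambda>u. PD G1 u u eta) ^^ k) u0) \<longlonglongrightarrow> ustar" for u0
  proof (rule conv_lemma[OF _ q0 q1])
    fix u
    have "norm (PD G1 u u eta - ustar) = norm (PD G1 u u eta - PD G1 ustar ustar eta)" by (simp add: fix0)
    also have "\<dots> \<le> c * norm (u - ustar) + eta * M' * norm (u - ustar)" by (rule lip)
    finally show "norm (PD G1 u u eta - ustar) \<le> q * norm (u - ustar)" by (simp add: q_def algebra_simps)
  qed
  have partB: "(\<lambda>k. (U_iter G1 eta Nt ^^ k) u0) \<longlonglongrightarrow> ustar" if Nt: "Nt \<ge> 1" for Nt u0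
  proof (rule conv_lemma[OF _ q0 q1])
    fix u
    define d where "d = norm (u - ustar)"
    have d0: "0 \<le> d" by (simp add: d_def)
    have step: "norm (((\<lambda>v. PD G1 v u eta) ^^ j) u - ustar) \<le> d \<and>
                (j \<ge> 1 \<longrightarrow> norm (((\<lambda>v. PD G1 v u eta) ^^ j) u - ustar) \<le> q * d)" for j
    proof (induction j)
      case 0 thus ?case by (simp add: d_def)
    next
      case (Suc j)
      let ?v = "((\<lambda>v. PD G1 v u eta) ^^ j) u"
      have "norm (((\<lambda>v. PD G1 v u eta) ^^ Suc j) u - ustar) = norm (PD G1 ?v u eta - PD G1 ustar ustar eta)"
        by (simp add: fix0)
      also have "\<dots> \<le> c * norm (?v - ustar) + eta * M' * norm (u - ustar)" by (rule lip)
      also have "\<dots> \<le> c * d + eta * M' * d"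
        using Suc c0 by (simp add: d_def mult_left_mono)
      also have "\<dots> = q * d" by (simp add: q_def algebra_simps)
      finally have "norm (((\<lambda>v. PD G1 v u eta) ^^ Suc j) u - ustar) \<le> q * d" .
      moreover have "q * d \<le> d" using q1 d0 q0 by (simp add: mult_left_le_one_le)
      ultimately show ?case by simp
    qed
    show "norm (U_iter G1 eta Nt u - ustar) \<le> q * norm (u - ustar)"
      using step[of Nt] Nt by (simp add: U_iter_def d_def)
  qed
  show ?thesis using partA partB by blast
qed

end
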